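(* Let $\mathbf G$ be a torsion-free locally cyclic group such that $\mathcal O_{\mathbf G}(x)\cong\mathcal I_{\mathbf G}(x)$ (as graphs) for all $x\in G$. Then $\mathbf G\cong(\mathbb Q,+)$.
   Context: For a group $\mathbf G$, the directed $Z^\pm$-power graph $\vec{\mathcal G}^\pm(\mathbf G)$ has vertex set $G$ and an arc $x\to y$ for distinct $x,y$ iff $y=x^n$ for some $n\in\mathbb Z\setminus\{0\}$; its underlying simple graph is the $Z^\pm$-power graph $\mathcal G^\pm(\mathbf G)$ (distinct $x,y$ adjacent iff $y=x^n$ or $x=y^n$ for some nonzero integer $n$). For $x\in G$ let $I_{\mathbf G}(x)=\{y\in G\setminus\{x^{-1}\}\mid y\to x\}$ and $O_{\mathbf G}(x)=\{y\in G\setminus\{x^{-1}\}\mid x\to y\}$ (arcs in $\vec{\mathcal G}^\pm(\mathbf G)$), and let $\mathcal I_{\mathbf G}(x)$, $\mathcal O_{\mathbf G}(x)$ be the subgraphs of $\mathcal G^\pm(\mathbf G)$ induced by $I_{\mathbf G}(x)$, $O_{\mathbf G}(x)$ respectively. *)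

theory Defs
  imports "HOL-Algebra.Algebra"
begin

definition rat_add_group :: "rat monoid" where
  "rat_add_group = \<lparr>carrier = UNIV, monoid.mult = (+), one = 0\<rparr>"

definition pm_arc :: "('a, 'b) monoid_scheme \<Rightarrow> 'a \<Rightarrow> 'a \<Rightarrow> bool" where
  "pm_arc G x y \<longleftrightarrow> x \<in> carrier G \<and> y \<in> carrier G \<and> x \<noteq> y \<and>
     (\<exists>n::int. n \<noteq> 0 \<and> y = x [^]\<^bsub>G\<^esub> n)"

definition pm_adj :: "('a, 'b) monoid_scheme \<Rightarrow> 'a \<Rightarrow> 'a \<Rightarrow> bool" where
  "pm_adj G x y \<longleftrightarrow> pm_arc G x y \<or> pm_arc G y x"

definition pm_in :: "('a, 'b) monoid_scheme \<Rightarrow> 'a \<Rightarrow> 'a set" where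
  "pm_in G x = {y \<in> carrier G - {inv\<^bsub>G\<^esub> x}. pm_arc G y x}"

definition pm_out :: "('a, 'b) monoid_scheme \<Rightarrow> 'a \<Rightarrow> 'a set" where
  "pm_out G x = {y \<in> carrier G - {inv\<^bsub>G\<^esub> x}. pm_arc G x y}"

definition induced_iso :: "('a \<Rightarrow> 'a \<Rightarrow> bool) \<Rightarrow> 'a set \<Rightarrow> 'a set \<Rightarrow> bool" where
  "induced_iso E A B \<longleftrightarrow>
     (\<exists>f. bij_betw f A B \<and> (\<forall>u\<in>A. \<forall>v\<in>A. E u v \<longleftrightarrow> E (f u) (f v)))"

definition torsion_free :: "('a, 'b) monoid_scheme \<Rightarrow> bool" where
  "torsion_free G \<longleftrightarrow>
     (\<forall>x\<in>carrier G. \<forall>n::nat. n > 0 \<and> x [^]\<^bsub>G\<^esub> n = \<one>\<^bsub>G\<^esub> \<longrightarrow> x = \<one>\<^bsub>G\<^esub>)"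

definition locally_cyclic :: "('a, 'b) monoid_scheme \<Rightarrow> bool" where
  "locally_cyclic G \<longleftrightarrow>
     (\<forall>A. A \<subseteq> carrier G \<and> finite A \<longrightarrow>
        (\<exists>g\<in>carrier G. generate G A = generate G {g}))"

end

theory Submission
  imports Defs "HOL-Computational_Algebra.Primes"
begin


abbreviation zprime :: "int \<Rightarrow> bool" where "zprime \<equiv> Factorial_Ring.prime"

definition dg :: "int \<Rightarrow> int \<Rightarrow> bool" where
  "dg a b \<longleftrightarrow> a \<noteq> b \<and> (a dvd b \<or> b dvd a)"

definition nb :: "('a \<Rightarrow> 'a \<Rightarrow> bool) \<Rightarrow> 'a set \<Rightarrow> 'a \<Rightarrow> 'a set" where
  "nb E V v = {u \<in> V. u = v \<or> E u v}"

definition domi :: "('a \<Rightarrow> 'a \<Rightarrow> bool) \<Rightarrow> 'a set \<Rightarrow> 'a \<Rightarrow> 'a \<Rightarrow> bool" where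
  "domi E V w v \<longleftrightarrow> w \<in> V \<and> v \<in> V \<and> nb E V w \<subset> nb E V v"

definition PF :: "('a \<Rightarrow> 'a \<Rightarrow> bool) \<Rightarrow> 'a set \<Rightarrow> bool" where
  "PF E V \<longleftrightarrow> (\<forall>u\<in>V. \<exists>v\<in>V. E u v \<and> (\<exists>w. domi E V w v))"

definition PH :: "('a \<Rightarrow> 'a \<Rightarrow> bool) \<Rightarrow> 'a set \<Rightarrow> bool" where
  "PH E V \<longleftrightarrow> (\<exists>S\<subseteq>V. infinite S \<and> (\<forall>a\<in>S. \<forall>b\<in>S. \<not> E a b) \<and> (\<forall>v\<in>S. \<exists>w. domi E V w v))"

lemma nb_image:
  assumes bij: "bij_betw f A B" and E: "\<forall>u\<in>A. \<forall>v\<in>A. E u v \<longleftrightarrow> E' (f u) (f v)" and v: "v \<in> A"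
  shows "f ` nb E A v = nb E' B (f v)"
proof -
  have inj: "inj_on f A" and im: "f ` A = B" using bij by (auto simp: bij_betw_def)
  show ?thesis
  proof (intro equalityI subsetI)
    fix y assume "y \<in> f ` nb E A v"
    then obtain u where u: "u \<in> A" "u = v \<or> E u v" "y = f u" by (auto simp: nb_def)
    then show "y \<in> nb E' B (f v)" using E v im by (auto simp: nb_def)
  next
    fix y assume "y \<in> nb E' B (f v)"
    then have y: "y \<in> B" "y = f v \<or> E' y (f v)" by (auto simp: nb_def)
    then obtain u where u: "u \<in> A" "y = f u" using im by auto
    have "u = v \<or> E u v" using y u E v inj by (auto dest: inj_onD)
    then show "y \<in> f ` nb E A v" using u by (auto simp: nb_def)
  qed
qed

lemma transfer_fwd:
  assumes bij: "bij_betw f A B" and E: "\<forall>u\<in>A. \<forall>v\<in>A. E u v \<longleftrightarrow> E' (f u) (f v)"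
  shows "PF E A \<Longrightarrow> PF E' B" and "PH E A \<Longrightarrow> PH E' B"
proof -
  have inj: "inj_on f A" and im: "f ` A = B" using bij by (auto simp: bij_betw_def)
  have nbsub: "nb E A w \<subseteq> A" for w by (auto simp: nb_def)
  have dom: "domi E' B (f w) (f v)" if "domi E A w v" for w v
  proof -
    have wv: "w \<in> A" "v \<in> A" "nb E A w \<subset> nb E A v" using that by (auto simp: domi_def)
    have "f ` nb E A w \<subset> f ` nb E A v"
      using wv(3) inj_on_image_eq_iff[OF inj nbsub nbsub] by blast
    then show ?thesis using wv nb_image[OF bij E] im by (auto simp: domi_def)
  qed
  show "PF E' B" if H: "PF E A"
    unfolding PF_def
  proof
    fix y assume "y \<in> B"
    then obtain u where u: "u \<in> A" "y = f u" using im by auto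
    then obtain v w where "v \<in> A" "E u v" "domi E A w v" using H u(1) unfolding PF_def by blast
    then show "\<exists>v\<in>B. E' y v \<and> (\<exists>w. domi E' B w v)" using u E dom im by blast
  qed
  show "PH E' B" if H: "PH E A"
  proof -
    obtain S where S: "S \<subseteq> A" "infinite S" "\<forall>a\<in>S. \<forall>b\<in>S. \<not> E a b" "\<forall>v\<in>S. \<exists>w. domi E A w v"
      using H unfolding PH_def by blast
    have "infinite (f ` S)" using S(1,2) inj by (meson finite_imageD inj_on_subset)
    moreover have "f ` S \<subseteq> B" using S(1) im by auto
    moreover have "\<forall>a\<in>f ` S. \<forall>b\<in>f ` S. \<not> E' a b" using S(1,3) E by blast
    moreover have "\<forall>v\<in>f ` S. \<exists>w. domi E' B w v" using S(4) dom by blast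
    ultimately show ?thesis unfolding PH_def by blast
  qed
qed

lemma transfer_bwd:
  assumes bij: "bij_betw f A B" and E: "\<forall>u\<in>A. \<forall>v\<in>A. E u v \<longleftrightarrow> E' (f u) (f v)"
  shows "PF E' B \<Longrightarrow> PF E A" and "PH E' B \<Longrightarrow> PH E A"
proof -
  let ?g = "inv_into A f"
  have bij': "bij_betw ?g B A" using bij by (rule bij_betw_inv_into)
  have E': "\<forall>u\<in>B. \<forall>v\<in>B. E' u v \<longleftrightarrow> E (?g u) (?g v)"
  proof (intro ballI)
    fix u v assume "u \<in> B" "v \<in> B"
    then have "?g u \<in> A" "?g v \<in> A" "f (?g u) = u" "f (?g v) = v"
      using bij bij' by (auto simp: bij_betw_def f_inv_into_f)
    then show "E' u v \<longleftrightarrow> E (?g u) (?g v)" using E by metis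
  qed
  show "PF E' B \<Longrightarrow> PF E A" "PH E' B \<Longrightarrow> PH E A" using transfer_fwd[OF bij' E'] by auto
qed

definition good :: "int set \<Rightarrow> bool" where
  "good D \<longleftrightarrow> (\<forall>n\<in>D. 2 \<le> \<bar>n\<bar>) \<and> (\<forall>n\<in>D. -n \<in> D) \<and>
     (\<forall>n\<in>D. \<forall>d. d dvd n \<and> 2 \<le> \<bar>d\<bar> \<longrightarrow> d \<in> D) \<and> (\<forall>a\<in>D. \<forall>b\<in>D. lcm a b \<in> D)"

lemma good_ge: "good D \<Longrightarrow> n \<in> D \<Longrightarrow> 2 \<le> \<bar>n\<bar>" unfolding good_def by blast
lemma good_neg: "good D \<Longrightarrow> n \<in> D \<Longrightarrow> -n \<in> D" unfolding good_def by blast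
lemma good_dvd: "good D \<Longrightarrow> n \<in> D \<Longrightarrow> d dvd n \<Longrightarrow> 2 \<le> \<bar>d\<bar> \<Longrightarrow> d \<in> D" unfolding good_def by blast
lemma good_lcm: "good D \<Longrightarrow> a \<in> D \<Longrightarrow> b \<in> D \<Longrightarrow> lcm a b \<in> D" unfolding good_def by blast

lemma zprime_div: "zprime s \<Longrightarrow> d dvd s \<Longrightarrow> \<bar>d\<bar> = 1 \<or> \<bar>d\<bar> = s"
proof -
  assume s: "zprime s" and d: "d dvd s"
  have "\<forall>m. m \<ge> 0 \<and> m dvd s \<longrightarrow> m = 1 \<or> m = s" using s unfolding prime_int_iff by blast
  moreover have "\<bar>d\<bar> dvd s" using d by simp
  ultimately show ?thesis by auto
qed

lemma nb_neg:
  assumes "good D" "v \<in> D" shows "nb dg D (-v) = nb dg D v"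
proof -
  have "v \<noteq> 0" using good_ge[OF assms] by auto
  then have "v \<noteq> -v" by simp
  then show ?thesis unfolding nb_def dg_def by auto
qed

lemma domi_basic:
  assumes g: "good D" and d: "domi dg D w v"
  shows "(w dvd v \<and> \<not> v dvd w) \<or> (v dvd w \<and> \<not> w dvd v)"
proof -
  have wv: "w \<in> D" "v \<in> D" "nb dg D w \<subset> nb dg D v" using d by (auto simp: domi_def)
  have "w \<in> nb dg D w" using wv by (auto simp: nb_def)
  then have "w \<in> nb dg D v" using wv by auto
  moreover have "w \<noteq> v" using wv by auto
  ultimately have dgw: "w dvd v \<or> v dvd w" by (auto simp: nb_def dg_def)
  have "\<not> (w dvd v \<and> v dvd w)"
  proof
    assume "w dvd v \<and> v dvd w"
    then have "\<bar>w\<bar> = \<bar>v\<bar>" using zdvd_antisym_abs by blast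
    then have "w = -v" using \<open>w \<noteq> v\<close> by (auto simp: abs_if split: if_splits)
    then show False using nb_neg[OF g wv(2)] wv(3) by auto
  qed
  then show ?thesis using dgw by blast
qed

lemma dom_wit:
  assumes "domi dg D w v" "t \<in> D" "t = w \<or> dg t w" "t \<noteq> v" "\<not> t dvd v" "\<not> v dvd t"
  shows False
proof -
  have "t \<in> nb dg D w" using assms by (auto simp: nb_def)
  then have "t \<in> nb dg D v" using assms(1) by (auto simp: domi_def)
  then show False using assms by (auto simp: nb_def dg_def)
qed

definition Z2 :: "int set" where "Z2 = {n. 2 \<le> \<bar>n\<bar>}"

lemma good_Z2: "good Z2"
proof -
  have "2 \<le> \<bar>lcm a b\<bar>" if "2 \<le> \<bar>a\<bar>" "2 \<le> \<bar>b\<bar>" for a b :: int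
  proof -
    have "a dvd lcm a b" "lcm a b \<noteq> 0" using that by auto
    then have "\<bar>a\<bar> \<le> \<bar>lcm a b\<bar>" using dvd_imp_le_int by blast
    then show ?thesis using that by linarith
  qed
  then show ?thesis unfolding good_def Z2_def by auto
qed

lemma zprime_dvd_sq: "zprime q \<Longrightarrow> t dvd q * q \<Longrightarrow> 2 \<le> \<bar>t\<bar> \<Longrightarrow> q dvd t"
proof -
  assume q: "zprime q" and t: "t dvd q * q" "2 \<le> \<bar>t\<bar>"
  obtain r where r: "zprime r" "r dvd t" using prime_factor_int[of t] t(2) by auto
  then have "r dvd q * q" using t(1) dvd_trans by blast
  then have "r dvd q" using r(1) by (metis prime_dvd_mult_iff)
  then have "r = q" using r(1) q primes_dvd_imp_eq by blast
  then show ?thesis using r by simp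
qed

lemma dom_sq:
  assumes q: "zprime q" and v: "v = q \<or> v = -q"
  shows "domi dg Z2 (q*q) v"
proof -
  have q2: "2 \<le> q" using prime_ge_2_int q by blast
  have vZ: "v \<in> Z2" using v q2 by (auto simp: Z2_def)
  have "2 * 2 \<le> q * q" using q2 by (intro mult_mono) auto
  then have qqZ: "q * q \<in> Z2" by (auto simp: Z2_def)
  have sub: "nb dg Z2 (q*q) \<subseteq> nb dg Z2 v"
  proof
    fix t assume t: "t \<in> nb dg Z2 (q*q)"
    then have tZ: "2 \<le> \<bar>t\<bar>" by (auto simp: nb_def Z2_def)
    have "t = q*q \<or> t dvd q*q \<or> q*q dvd t" using t by (auto simp: nb_def dg_def)
    then have "q dvd t" using zprime_dvd_sq[OF q _ tZ] by (metis dvd_mult_left dvd_refl)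
    then have "v dvd t" using v by auto
    then show "t \<in> nb dg Z2 v" using t by (auto simp: nb_def dg_def)
  qed
  define t0 where "t0 = q * (q + 1)"
  have "2 * 3 \<le> q * (q + 1)" using q2 by (intro mult_mono) auto
  then have t0Z: "t0 \<in> Z2" unfolding t0_def Z2_def by auto
  have vt0: "v dvd t0" using v by (auto simp: t0_def)
  have "q * 1 < q * (q + 1)" using q2 by (intro mult_strict_left_mono) auto
  then have a1: "q < q * (q + 1)" by simp
  have a2: "0 < q * (q + 1)" using q2 by simp
  have "t0 \<noteq> v" using v q2 a1 a2 unfolding t0_def by linarith
  then have in1: "t0 \<in> nb dg Z2 v" using t0Z vt0 by (auto simp: nb_def dg_def)
  have ne: "t0 \<noteq> q * q" using q2 unfolding t0_def by simp
  have n1: "\<not> q * q dvd t0"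
  proof
    assume "q * q dvd t0"
    then have "q dvd q + 1" using q2 unfolding t0_def by simp
    then have "q dvd 1" by (simp add: dvd_add_right_iff)
    then show False using q2 by simp
  qed
  have n2: "\<not> t0 dvd q * q"
  proof
    assume "t0 dvd q * q"
    then have "q + 1 dvd q" using q2 unfolding t0_def by simp
    then have "q + 1 \<le> q" using q2 zdvd_imp_le[of "q+1" q] by linarith
    then show False by simp
  qed
  have "t0 \<notin> nb dg Z2 (q*q)" using ne n1 n2 by (auto simp: nb_def dg_def)
  then have "nb dg Z2 (q*q) \<subset> nb dg Z2 v" using sub in1 by blast
  then show ?thesis using vZ qqZ by (auto simp: domi_def)
qed

lemma full_PF: "PF dg Z2"
  unfolding PF_def
proof
  fix u assume u: "u \<in> Z2"
  then obtain q where q: "zprime q" "q dvd u" using prime_factor_int[of u] by (auto simp: Z2_def)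
  have q2: "2 \<le> q" using prime_ge_2_int q by blast
  define v where "v = (if u = q then -q else q)"
  have v: "v = q \<or> v = -q" by (auto simp: v_def)
  have "dg u v" using q q2 unfolding v_def dg_def by auto
  moreover have "v \<in> Z2" using v q2 by (auto simp: Z2_def)
  ultimately show "\<exists>v\<in>Z2. dg u v \<and> (\<exists>w. domi dg Z2 w v)" using dom_sq[OF q(1) v] by blast
qed

lemma infinite_zprimes: "infinite {q::int. zprime q}"
proof -
  have "int ` {p::nat. Factorial_Ring.prime p} \<subseteq> {q::int. zprime q}" by auto
  moreover have "infinite (int ` {p::nat. Factorial_Ring.prime p})"
    using primes_infinite by (simp add: finite_image_iff)
  ultimately show ?thesis using finite_subset by blast
qed

lemma full_PH: "PH dg Z2"
  unfolding PH_def
proof (intro exI conjI)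
  show "{q. zprime q} \<subseteq> Z2" using prime_ge_2_int by (auto simp: Z2_def)
  show "infinite {q. zprime q}" by (rule infinite_zprimes)
  show "\<forall>a\<in>{q. zprime q}. \<forall>b\<in>{q. zprime q}. \<not> dg a b"
    using primes_dvd_imp_eq by (auto simp: dg_def)
  show "\<forall>v\<in>{q. zprime q}. \<exists>w. domi dg Z2 w v" using dom_sq by blast
qed

lemma abs_mult_ge: "2 \<le> \<bar>a::int\<bar> \<Longrightarrow> b \<noteq> 0 \<Longrightarrow> \<bar>a\<bar> \<le> \<bar>a * b\<bar>"
proof -
  assume "2 \<le> \<bar>a\<bar>" "b \<noteq> 0"
  then have "\<bar>a\<bar> * 1 \<le> \<bar>a\<bar> * \<bar>b\<bar>" by (intro mult_left_mono) auto
  then show ?thesis by (simp add: abs_mult)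
qed

lemma notF:
  assumes g: "good D" and p: "zprime p" "p \<in> D" "p * p \<notin> D"
    and inf: "infinite {s. zprime s \<and> s \<in> D}"
  shows "\<not> PF dg D"
proof
  assume "PF dg D"
  then obtain v w where v: "v \<in> D" "dg p v" and d: "domi dg D w v" using p(2) unfolding PF_def by blast
  have p2: "2 \<le> p" using prime_ge_2_int p(1) by blast
  have wD: "w \<in> D" using d by (auto simp: domi_def)
  have v2: "2 \<le> \<bar>v\<bar>" using good_ge[OF g v(1)] .
  have w2: "2 \<le> \<bar>w\<bar>" using good_ge[OF g wD] .
  have v0: "v \<noteq> 0" and w0: "w \<noteq> 0" using v2 w2 by auto
  have pv: "p dvd v"
  proof -
    from v(2) have "p dvd v \<or> v dvd p" by (auto simp: dg_def)
    moreover have "p dvd v" if "v dvd p"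
    proof -
      have "\<bar>v\<bar> = 1 \<or> \<bar>v\<bar> = p" using zprime_div[OF p(1) that] .
      then have "\<bar>v\<bar> = p" using v2 by auto
      then show ?thesis by (metis dvd_abs_iff dvd_refl)
    qed
    ultimately show ?thesis by blast
  qed
  from domi_basic[OF g d] show False
  proof
    assume A: "w dvd v \<and> \<not> v dvd w"
    have fin: "finite {s. zprime s \<and> s dvd v}"
    proof (rule finite_subset)
      show "{s. zprime s \<and> s dvd v} \<subseteq> {-\<bar>v\<bar>..\<bar>v\<bar>}"
      proof
        fix s assume "s \<in> {s. zprime s \<and> s dvd v}"
        then have "\<bar>s\<bar> \<le> \<bar>v\<bar>" using dvd_imp_le_int[OF v0] by simp
        then show "s \<in> {-\<bar>v\<bar>..\<bar>v\<bar>}" by (simp add: abs_le_iff)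
      qed
    qed simp
    have "\<not> {s. zprime s \<and> s \<in> D} \<subseteq> {s. zprime s \<and> s dvd v}"
      using inf fin by (meson finite_subset)
    then obtain s where s: "zprime s" "s \<in> D" "\<not> s dvd v" by blast
    have s2: "2 \<le> s" using prime_ge_2_int s(1) by blast
    have cop: "coprime v s" using prime_imp_coprime[OF s(1) s(3)] by (simp add: coprime_commute)
    have "lcm v s \<in> D" using good_lcm[OF g v(1) s(2)] .
    moreover have "lcm v s = \<bar>v * s\<bar>" using lcm_coprime[OF cop] by simp
    moreover have "w * s dvd v * s" using A by (simp add: mult_dvd_mono)
    moreover have "2 \<le> \<bar>w * s\<bar>" using abs_mult_ge[OF w2, of s] s2 w2 by linarith
    ultimately have eD: "w * s \<in> D" using good_dvd[OF g] by (metis dvd_abs_iff)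
    have ne1: "w * s \<noteq> w" using w0 s2 by simp
    have ne2: "w * s \<noteq> v" using s(3) by auto
    have n3: "\<not> w * s dvd v" using s(3) dvd_mult_right[of w s v] by blast
    have n4: "\<not> v dvd w * s"
    proof
      assume h: "v dvd w * s"
      obtain t where t: "v = w * t" using A by blast
      then have "t dvd s" using h w0 by simp
      then have "\<bar>t\<bar> = 1 \<or> \<bar>t\<bar> = s" using zprime_div[OF s(1)] by blast
      then show False
      proof
        assume "\<bar>t\<bar> = 1"
        then have "t = 1 \<or> t = -1" by auto
        then have "v dvd w" using t by auto
        then show False using A by blast
      next
        assume "\<bar>t\<bar> = s"
        then have "s dvd t" by (metis dvd_abs_iff dvd_refl)
        then have "s dvd v" using t by simp
        then show False using s(3) by blast
      qed
    qed
    show False using dom_wit[OF d eD _ ne2 n3 n4] ne1 by (auto simp: dg_def)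
  next
    assume B: "v dvd w \<and> \<not> w dvd v"
    obtain k where k: "v = p * k" using pv by blast
    obtain t where t: "w = v * t" using B by blast
    define m where "m = k * t"
    have wm: "w = p * m" using k t by (simp add: m_def)
    have m0: "m \<noteq> 0" using w0 wm by auto
    have npm: "\<not> p dvd m"
    proof
      assume "p dvd m"
      then have "p * p dvd w" using wm by simp
      moreover have "2 \<le> \<bar>p * p\<bar>" using abs_mult_ge[of p p] p2 by linarith
      ultimately have "p * p \<in> D" using good_dvd[OF g wD] by blast
      then show False using p(3) by blast
    qed
    have m1: "\<bar>m\<bar> \<noteq> 1"
    proof
      assume "\<bar>m\<bar> = 1"
      then have "m = 1 \<or> m = -1" by auto
      then have "w dvd v" using wm pv by auto
      then show False using B by blast
    qed
    have m2: "2 \<le> \<bar>m\<bar>" using m0 m1 by linarith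
    have mD: "m \<in> D" using good_dvd[OF g wD _ m2] wm by simp
    have ne1: "m \<noteq> w" using wm m0 p2 by auto
    have ne2: "m \<noteq> v" using pv npm by auto
    have n4: "\<not> v dvd m" using pv npm dvd_trans by blast
    have n3: "\<not> m dvd v"
    proof
      assume "m dvd v"
      then have "m dvd k * p" using k by (simp add: ac_simps)
      moreover have "coprime m p" using prime_imp_coprime[OF p(1) npm] by (simp add: coprime_commute)
      ultimately have "m dvd k" using coprime_dvd_mult_left_iff by blast
      then have "k * t dvd k * 1" by (simp add: m_def)
      moreover have "k \<noteq> 0" using k v0 by auto
      ultimately have "t dvd 1" by (metis dvd_mult_cancel_left)
      then have "t = 1 \<or> t = -1" by (auto simp: zdvd1_eq)
      then have "w dvd v" using t by auto
      then show False using B by blast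
    qed
    show False using dom_wit[OF d mD _ ne2 n3 n4] ne1 wm by (auto simp: dg_def)
  qed
qed

lemma typeB:
  assumes g: "good D" and d: "domi dg D w v" and B: "v dvd w" "\<not> w dvd v"
  shows "\<exists>q. zprime q \<and> q dvd w \<and> (\<forall>r. zprime r \<and> r dvd v \<longrightarrow> r = q)"
proof -
  have wD: "w \<in> D" and vD: "v \<in> D" using d by (auto simp: domi_def)
  have w0: "w \<noteq> 0" and v0: "v \<noteq> 0" using good_ge[OF g wD] good_ge[OF g vD] by auto
  obtain q where q: "zprime q" "multiplicity q v < multiplicity q w"
  proof -
    have "\<not> (\<forall>q. zprime q \<longrightarrow> multiplicity q w \<le> multiplicity q v)"
      using multiplicity_le_imp_dvd[OF w0] B(2) by blast
    then show ?thesis using that by (meson not_le)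
  qed
  have qw: "q dvd w"
  proof (rule ccontr)
    assume "\<not> q dvd w"
    then have "multiplicity q w = 0" by (rule not_dvd_imp_multiplicity_0)
    then show False using q(2) by simp
  qed
  have "r = q" if r: "zprime r" "r dvd v" for r
  proof (rule ccontr)
    assume rq: "r \<noteq> q"
    define n where "n = multiplicity q w"
    define e where "e = q ^ n"
    have n1: "0 < n" using q(2) by (simp add: n_def)
    have q2: "2 \<le> q" using prime_ge_2_int q(1) by blast
    have "q \<le> q ^ n" using q2 n1 by (intro self_le_power) auto
    then have e2: "2 \<le> \<bar>e\<bar>" using q2 by (simp add: e_def)
    have ew: "e dvd w" by (simp add: e_def n_def multiplicity_dvd)
    have eD: "e \<in> D" using good_dvd[OF g wD ew e2] .
    have nre: "\<not> r dvd e"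
    proof
      assume "r dvd e"
      then have "r dvd q" using prime_dvd_power[OF r(1)] by (simp add: e_def)
      then show False using primes_dvd_imp_eq[OF r(1) q(1)] rq by blast
    qed
    have rw: "r dvd w" using r(2) B(1) dvd_trans by blast
    have ne1: "e \<noteq> w" using nre rw by blast
    have ne2: "e \<noteq> v" using nre r(2) by blast
    have n3: "\<not> e dvd v"
    proof -
      have "\<not> n \<le> multiplicity q v" using q(2) by (simp add: n_def)
      moreover have "\<not> is_unit q" using q(1) not_prime_unit by blast
      ultimately show ?thesis unfolding e_def using power_dvd_iff_le_multiplicity[OF v0] by blast
    qed
    have n4: "\<not> v dvd e" using nre r(2) dvd_trans by blast
    show False using dom_wit[OF d eD _ ne2 n3 n4] ew ne1 by (auto simp: dg_def)
  qed
  then show ?thesis using q(1) qw by blast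
qed

lemma typeA:
  assumes g: "good D" and d: "domi dg D w v" and A: "w dvd v" "\<not> v dvd w"
  shows "\<exists>r. zprime r \<and> r dvd v \<and> (\<forall>s. zprime s \<and> s \<noteq> r \<longrightarrow> v * s \<notin> D)"
proof -
  have wD: "w \<in> D" and vD: "v \<in> D" using d by (auto simp: domi_def)
  have w2: "2 \<le> \<bar>w\<bar>" using good_ge[OF g wD] .
  have w0: "w \<noteq> 0" and v0: "v \<noteq> 0" using good_ge[OF g wD] good_ge[OF g vD] by auto
  obtain r where r: "zprime r" "multiplicity r w < multiplicity r v"
  proof -
    have "\<not> (\<forall>q. zprime q \<longrightarrow> multiplicity q v \<le> multiplicity q w)"
      using multiplicity_le_imp_dvd[OF v0] A(2) by blast
    then show ?thesis using that by (meson not_le)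
  qed
  have rv: "r dvd v"
  proof (rule ccontr)
    assume "\<not> r dvd v"
    then have "multiplicity r v = 0" by (rule not_dvd_imp_multiplicity_0)
    then show False using r(2) by simp
  qed
  have "v * s \<notin> D" if s: "zprime s" "s \<noteq> r" for s
  proof
    assume vsD: "v * s \<in> D"
    define m where "m = multiplicity s v"
    define e where "e = lcm w (s ^ (m + 1))"
    have s0: "s \<noteq> 0" using s(1) by auto
    have "s ^ m dvd v" by (simp add: m_def multiplicity_dvd)
    then have "s ^ m * s dvd v * s" by (simp add: mult_dvd_mono)
    then have sv: "s ^ (m + 1) dvd v * s" by simp
    have evs: "e dvd v * s" unfolding e_def using sv A(1) by (simp add: dvd_mult2)
    have we: "w dvd e" by (simp add: e_def)
    have e0: "e \<noteq> 0" using w0 s0 by (simp add: e_def lcm_eq_0_iff)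
    have "\<bar>w\<bar> \<le> \<bar>e\<bar>" using dvd_imp_le_int[OF e0 we] .
    then have e2: "2 \<le> \<bar>e\<bar>" using w2 by linarith
    have eD: "e \<in> D" using good_dvd[OF g vsD evs e2] .
    have "2 \<le> s" using prime_ge_2_int s(1) by blast
    have hs: "\<not> s ^ (m + 1) dvd v"
    proof -
      have "\<not> m + 1 \<le> multiplicity s v" by (simp add: m_def)
      moreover have "\<not> is_unit s" using s(1) not_prime_unit by blast
      ultimately show ?thesis using power_dvd_iff_le_multiplicity[OF v0] by blast
    qed
    have se: "s ^ (m + 1) dvd e" by (simp add: e_def)
    have ne1: "e \<noteq> w" using se hs A(1) dvd_trans by blast
    have ne2: "e \<noteq> v" using se hs by blast
    have n3: "\<not> e dvd v" using se hs dvd_trans by blast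
    have n4: "\<not> v dvd e"
    proof
      assume ve: "v dvd e"
      define a where "a = multiplicity r v"
      have "r ^ a dvd v" by (simp add: a_def multiplicity_dvd)
      moreover have "e dvd w * s ^ (m + 1)" unfolding e_def by (simp add: lcm_least)
      ultimately have "r ^ a dvd w * s ^ (m + 1)" using ve dvd_trans by blast
      moreover have "coprime (r ^ a) (s ^ (m + 1))"
        using primes_coprime[OF r(1) s(1)] s(2) by simp
      ultimately have "r ^ a dvd w" using coprime_dvd_mult_left_iff by blast
      moreover have "\<not> is_unit r" using r(1) not_prime_unit by blast
      ultimately have "a \<le> multiplicity r w" using power_dvd_iff_le_multiplicity[OF w0] by blast
      then show False using r(2) by (simp add: a_def)
    qed
    show False using dom_wit[OF d eD _ ne2 n3 n4] we ne1 by (auto simp: dg_def)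
  qed
  then show ?thesis using r(1) rv by blast
qed

definition Lab :: "int set \<Rightarrow> int \<Rightarrow> int \<Rightarrow> bool \<Rightarrow> bool" where
  "Lab D v q b \<longleftrightarrow> zprime q \<and> q \<in> D \<and>
     (b \<longrightarrow> (\<forall>r. zprime r \<and> r dvd v \<longrightarrow> r = q)) \<and>
     (\<not> b \<longrightarrow> (\<forall>s. zprime s \<and> s \<noteq> q \<longrightarrow> v * s \<notin> D))"

lemma dom_class:
  assumes g: "good D" and d: "domi dg D w v"
  shows "\<exists>q b. Lab D v q b"
proof -
  have wD: "w \<in> D" and vD: "v \<in> D" using d by (auto simp: domi_def)
  from domi_basic[OF g d] show ?thesis
  proof
    assume A: "w dvd v \<and> \<not> v dvd w"
    obtain r where r: "zprime r" "r dvd v" "\<forall>s. zprime s \<and> s \<noteq> r \<longrightarrow> v * s \<notin> D"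
      using typeA[OF g d] A by blast
    have "2 \<le> \<bar>r\<bar>" using prime_ge_2_int r(1) by auto
    then have "r \<in> D" using good_dvd[OF g vD r(2)] by blast
    then have "Lab D v r False" using r by (auto simp: Lab_def)
    then show ?thesis by blast
  next
    assume B: "v dvd w \<and> \<not> w dvd v"
    obtain q where q: "zprime q" "q dvd w" "\<forall>r. zprime r \<and> r dvd v \<longrightarrow> r = q"
      using typeB[OF g d] B by blast
    have "2 \<le> \<bar>q\<bar>" using prime_ge_2_int q(1) by auto
    then have "q \<in> D" using good_dvd[OF g wD q(2)] by blast
    then have "Lab D v q True" using q by (auto simp: Lab_def)
    then show ?thesis by blast
  qed
qed

lemma cmpT:
  assumes a0: "a \<noteq> 0" and b0: "b \<noteq> 0"
    and ha: "\<forall>r. zprime r \<and> r dvd a \<longrightarrow> r = q" and hb: "\<forall>r. zprime r \<and> r dvd b \<longrightarrow> r = q"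
  shows "a dvd b \<or> b dvd a"
proof (cases "multiplicity q a \<le> multiplicity q b")
  case True
  have "a dvd b"
  proof (rule multiplicity_le_imp_dvd[OF a0])
    fix t :: int assume t: "zprime t"
    show "multiplicity t a \<le> multiplicity t b"
    proof (cases "t = q")
      case True then show ?thesis using \<open>multiplicity q a \<le> multiplicity q b\<close> by simp
    next
      case False
      then have "\<not> t dvd a" using ha t by blast
      then show ?thesis by (simp add: not_dvd_imp_multiplicity_0)
    qed
  qed
  then show ?thesis by blast
next
  case False
  have "b dvd a"
  proof (rule multiplicity_le_imp_dvd[OF b0])
    fix t :: int assume t: "zprime t"
    show "multiplicity t b \<le> multiplicity t a"
    proof (cases "t = q")
      case True then show ?thesis using False by simp
    next
      case False
      then have "\<not> t dvd b" using hb t by blast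
      then show ?thesis by (simp add: not_dvd_imp_multiplicity_0)
    qed
  qed
  then show ?thesis by blast
qed

lemma mult_claim:
  assumes g: "good D" and aD: "a \<in> D" and bD: "b \<in> D" and s: "zprime s" and as: "a * s \<notin> D"
  shows "multiplicity s b \<le> multiplicity s a"
proof (rule ccontr)
  assume lt: "\<not> multiplicity s b \<le> multiplicity s a"
  have a2: "2 \<le> \<bar>a\<bar>" and b2: "2 \<le> \<bar>b\<bar>" using good_ge[OF g aD] good_ge[OF g bD] .
  have a0: "a \<noteq> 0" and b0: "b \<noteq> 0" using a2 b2 by auto
  have s2: "2 \<le> s" using prime_ge_2_int s by blast
  have s0: "s \<noteq> 0" using s2 by simp
  define L where "L = lcm a b"
  have LD: "L \<in> D" using good_lcm[OF g aD bD] by (simp add: L_def)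
  have L0: "L \<noteq> 0" using a0 b0 by (simp add: L_def lcm_eq_0_iff)
  have aL: "a dvd L" and bL: "b dvd L" by (simp_all add: L_def)
  have "a * s dvd L"
  proof (rule multiplicity_le_imp_dvd)
    show "a * s \<noteq> 0" using a0 s0 by simp
    fix t :: int assume t: "zprime t"
    have pe: "prime_elem t" using t by (rule prime_imp_prime_elem)
    have m: "multiplicity t (a * s) = multiplicity t a + multiplicity t s"
      using prime_elem_multiplicity_mult_distrib[OF pe a0 s0] .
    show "multiplicity t (a * s) \<le> multiplicity t L"
    proof (cases "t = s")
      case True
      have "multiplicity s s = 1" using multiplicity_prime[OF prime_imp_prime_elem[OF s]] .
      moreover have "multiplicity s b \<le> multiplicity s L" using dvd_imp_multiplicity_le[OF bL L0] .
      ultimately show ?thesis using m True lt by simp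
    next
      case False
      have "multiplicity t s = 0" using prime_multiplicity_other[OF t s False] .
      moreover have "multiplicity t a \<le> multiplicity t L" using dvd_imp_multiplicity_le[OF aL L0] .
      ultimately show ?thesis using m by simp
    qed
  qed
  moreover have "2 \<le> \<bar>a * s\<bar>" using abs_mult_ge[OF a2, of s] s0 a2 by linarith
  ultimately have "a * s \<in> D" using good_dvd[OF g LD] by blast
  then show False using as by blast
qed

lemma cmpF:
  assumes g: "good D" and aD: "a \<in> D" and bD: "b \<in> D"
    and ha: "\<forall>s. zprime s \<and> s \<noteq> q \<longrightarrow> a * s \<notin> D" and hb: "\<forall>s. zprime s \<and> s \<noteq> q \<longrightarrow> b * s \<notin> D"
  shows "a dvd b \<or> b dvd a"
proof -
  have a0: "a \<noteq> 0" and b0: "b \<noteq> 0" using good_ge[OF g aD] good_ge[OF g bD] by auto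
  have eq: "multiplicity t a = multiplicity t b" if "zprime t" "t \<noteq> q" for t
  proof -
    have "a * t \<notin> D" "b * t \<notin> D" using ha hb that by blast+
    then show ?thesis using mult_claim[OF g aD bD that(1)] mult_claim[OF g bD aD that(1)] by (meson le_antisym)
  qed
  show ?thesis
  proof (cases "multiplicity q a \<le> multiplicity q b")
    case True
    have "a dvd b"
    proof (rule multiplicity_le_imp_dvd[OF a0])
      fix t :: int assume t: "zprime t"
      show "multiplicity t a \<le> multiplicity t b"
        using True eq[OF t] by (cases "t = q") auto
    qed
    then show ?thesis by blast
  next
    case False
    have "b dvd a"
    proof (rule multiplicity_le_imp_dvd[OF b0])
      fix t :: int assume t: "zprime t"
      show "multiplicity t b \<le> multiplicity t a"
        using False eq[OF t] by (cases "t = q") auto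
    qed
    then show ?thesis by blast
  qed
qed

lemma notH:
  assumes g: "good D" and fin: "finite {s. zprime s \<and> s \<in> D}"
  shows "\<not> PH dg D"
proof
  assume "PH dg D"
  then have "\<exists>S. S \<subseteq> D \<and> infinite S \<and> (\<forall>a\<in>S. \<forall>b\<in>S. \<not> dg a b) \<and> (\<forall>v\<in>S. \<exists>w. domi dg D w v)"
    unfolding PH_def by simp
  then obtain S where S: "S \<subseteq> D" "infinite S" "\<forall>a\<in>S. \<forall>b\<in>S. \<not> dg a b" "\<forall>v\<in>S. \<exists>w. domi dg D w v"
    by (elim exE conjE) blast
  define lab where "lab v = (SOME qb. Lab D v (fst qb) (snd qb))" for v
  have labP: "Lab D v (fst (lab v)) (snd (lab v))" if "v \<in> S" for v
  proof -
    from S(4) that obtain w where "domi dg D w v" by (elim ballE exE) auto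
    then obtain q b where "Lab D v q b" using dom_class[OF g] by blast
    then have "\<exists>qb. Lab D v (fst qb) (snd qb)" by (intro exI[of _ "(q, b)"]) simp
    then show ?thesis unfolding lab_def by (rule someI_ex)
  qed
  have inj: "inj_on lab S"
  proof (rule inj_onI)
    fix a b assume a: "a \<in> S" and b: "b \<in> S" and e: "lab a = lab b"
    have aD: "a \<in> D" and bD: "b \<in> D" using a b S(1) by auto
    have a0: "a \<noteq> 0" and b0: "b \<noteq> 0" using good_ge[OF g aD] good_ge[OF g bD] by auto
    obtain q c where qc: "lab a = (q, c)" by fastforce
    have La: "Lab D a q c" using labP[OF a] qc by simp
    have Lb: "Lab D b q c" using labP[OF b] qc e by simp
    have "a dvd b \<or> b dvd a"
    proof (cases c)
      case True
      then have "\<forall>r. zprime r \<and> r dvd a \<longrightarrow> r = q" "\<forall>r. zprime r \<and> r dvd b \<longrightarrow> r = q"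
        using La Lb unfolding Lab_def by blast+
      then show ?thesis using cmpT[OF a0 b0] by blast
    next
      case False
      then have "\<forall>s. zprime s \<and> s \<noteq> q \<longrightarrow> a * s \<notin> D" "\<forall>s. zprime s \<and> s \<noteq> q \<longrightarrow> b * s \<notin> D"
        using La Lb unfolding Lab_def by blast+
      then show ?thesis using cmpF[OF g aD bD] by blast
    qed
    then show "a = b" using S(3) a b by (auto simp: dg_def)
  qed
  have "lab ` S \<subseteq> {s. zprime s \<and> s \<in> D} \<times> UNIV"
  proof
    fix x assume "x \<in> lab ` S"
    then obtain v where v: "v \<in> S" "x = lab v" by blast
    have "zprime (fst x) \<and> fst x \<in> D" using labP[OF v(1)] v(2) unfolding Lab_def by blast
    then show "x \<in> {s. zprime s \<and> s \<in> D} \<times> UNIV" by (cases x) auto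
  qed
  moreover have "finite ({s. zprime s \<and> s \<in> D} \<times> (UNIV :: bool set))" using fin by simp
  ultimately have "finite (lab ` S)" using finite_subset by blast
  then have "finite S" using inj finite_image_iff by blast
  then show False using S(2) by blast
qed




context group begin

lemma lc_pair:
  assumes lc: "locally_cyclic G" and x: "x \<in> carrier G" and y: "y \<in> carrier G"
  shows "\<exists>c\<in>carrier G. \<exists>(i::int) (j::int). x = c [^] i \<and> y = c [^] j"
proof -
  have "{x, y} \<subseteq> carrier G" "finite {x, y}" using x y by auto
  then obtain c where c: "c \<in> carrier G" "generate G {x, y} = generate G {c}"
    using lc unfolding locally_cyclic_def by blast
  have "x \<in> generate G {c}" "y \<in> generate G {c}" using c(2) generate.incl[of _ "{x,y}" G] by auto
  then obtain i j where "x = c [^] (i::int)" "y = c [^] (j::int)" using generate_pow[OF c(1)] by auto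
  then show ?thesis using c(1) by (intro bexI[of _ c] exI[of _ i] exI[of _ j]) auto
qed

lemma lc_comm:
  assumes lc: "locally_cyclic G" shows "comm_group G"
proof (rule group_comm_groupI)
  fix x y assume x: "x \<in> carrier G" and y: "y \<in> carrier G"
  then obtain c i j where c: "c \<in> carrier G" "x = c [^] (i::int)" "y = c [^] (j::int)"
    using lc_pair[OF lc x y] by blast
  have "x \<otimes> y = c [^] (i + j)" using c by (simp add: int_pow_mult)
  also have "\<dots> = c [^] (j + i)" by (simp add: add.commute)
  also have "\<dots> = y \<otimes> x" using c by (simp add: int_pow_mult)
  finally show "x \<otimes> y = y \<otimes> x" .
qed

lemma tf_int:
  assumes tf: "torsion_free G" and x: "x \<in> carrier G" and n: "n \<noteq> 0" and e: "x [^] (n::int) = \<one>"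
  shows "x = \<one>"
proof -
  have pos: "x = \<one>" if "0 < m" "x [^] (m::int) = \<one>" for m
  proof -
    have "x [^] (nat m) = \<one>" using that int_pow_int[of G x "nat m"] by simp
    moreover have "0 < nat m" using that(1) by simp
    ultimately show ?thesis using tf x unfolding torsion_free_def by blast
  qed
  show ?thesis
  proof (cases "0 < n")
    case True then show ?thesis using pos e by blast
  next
    case False
    then have "0 < -n" using n by simp
    moreover have "x [^] (-n) = \<one>" using e int_pow_neg[OF x, of n] by simp
    ultimately show ?thesis using pos by blast
  qed
qed

lemma pow_eq:
  assumes tf: "torsion_free G" and x: "x \<in> carrier G" and x1: "x \<noteq> \<one>"
    and e: "x [^] (m::int) = x [^] (n::int)"
  shows "m = n"
proof (rule ccontr)
  assume "m \<noteq> n"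
  then have "m - n \<noteq> 0" by simp
  moreover have "x [^] (m - n) = \<one>" using e x by (simp add: int_pow_diff)
  ultimately show False using tf_int[OF tf x] x1 by blast
qed

end

context comm_group begin

lemma root_uniq:
  assumes tf: "torsion_free G" and u: "u \<in> carrier G" and w: "w \<in> carrier G"
    and n: "n \<noteq> 0" and e: "u [^] (n::int) = w [^] n"
  shows "u = w"
proof -
  have "(u \<otimes> inv w) [^] n = u [^] n \<otimes> (inv w) [^] n"
    using int_pow_distrib u w by simp
  also have "\<dots> = u [^] n \<otimes> inv (w [^] n)" by (simp only: int_pow_inv[OF w])
  also have "\<dots> = \<one>" unfolding e by (rule r_inv) (simp add: w)
  finally have eq: "(u \<otimes> inv w) [^] n = \<one>" .
  have uw: "u \<otimes> inv w \<in> carrier G" using u w by simp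
  have "u \<otimes> inv w = \<one>" using tf_int[OF tf uw n eq] .
  then have "inv (inv w) = u" using inv_equality[of u "inv w"] u w by blast
  then show ?thesis using w by simp
qed

end


definition Dset :: "('a, 'b) monoid_scheme \<Rightarrow> 'a \<Rightarrow> int set" where
  "Dset G x = {n. 2 \<le> \<bar>n\<bar> \<and> (\<exists>y\<in>carrier G. y [^]\<^bsub>G\<^esub> n = x)}"

context comm_group begin

lemma good_Dset:
  assumes tf: "torsion_free G" and lc: "locally_cyclic G" and x: "x \<in> carrier G" and x1: "x \<noteq> \<one>"
  shows "good (Dset G x)"
  unfolding good_def
proof (intro conjI ballI allI impI)
  fix n assume "n \<in> Dset G x" then show "2 \<le> \<bar>n\<bar>" by (simp add: Dset_def)
next
  fix n assume "n \<in> Dset G x"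
  then obtain y where y: "y \<in> carrier G" "y [^] n = x" "2 \<le> \<bar>n\<bar>" by (auto simp: Dset_def)
  have "(inv y) [^] (-n) = inv (inv (y [^] n))" using y(1) by (simp add: int_pow_inv int_pow_neg)
  also have "\<dots> = x" using y by (simp add: x)
  finally show "-n \<in> Dset G x" using y by (auto simp: Dset_def)
next
  fix n d assume nD: "n \<in> Dset G x" and d: "d dvd n \<and> 2 \<le> \<bar>d\<bar>"
  then obtain y where y: "y \<in> carrier G" "y [^] n = x" by (auto simp: Dset_def)
  obtain e where e: "n = d * e" using d by blast
  have "(y [^] e) [^] d = y [^] (e * d)" using y(1) by (simp add: int_pow_pow)
  also have "\<dots> = x" using y e by (simp add: mult.commute)
  finally show "d \<in> Dset G x" using d y(1) by (auto simp: Dset_def)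
next
  fix a b assume aD: "a \<in> Dset G x" and bD: "b \<in> Dset G x"
  then obtain y u where y: "y \<in> carrier G" "y [^] a = x" "2 \<le> \<bar>a\<bar>"
    and u: "u \<in> carrier G" "u [^] b = x" "2 \<le> \<bar>b\<bar>" by (auto simp: Dset_def)
  obtain c i j where c: "c \<in> carrier G" "y = c [^] (i::int)" "u = c [^] (j::int)"
    using lc_pair[OF lc y(1) u(1)] by blast
  have xa: "c [^] (i * a) = x" using y c by (simp add: int_pow_pow)
  have xb: "c [^] (j * b) = x" using u c by (simp add: int_pow_pow)
  have c1: "c \<noteq> \<one>" using xa x1 by auto
  have N: "i * a = j * b" using pow_eq[OF tf c(1) c1] xa xb by simp
  have "a dvd i * a" "b dvd i * a" using N by simp_all (metis dvd_triv_right)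
  then have "lcm a b dvd i * a" by (rule lcm_least)
  then obtain e where e: "i * a = lcm a b * e" by blast
  have "(c [^] e) [^] (lcm a b) = c [^] (e * lcm a b)" using c(1) by (simp add: int_pow_pow)
  also have "\<dots> = x" using xa e by (simp add: mult.commute)
  finally have ex: "(c [^] e) [^] (lcm a b) = x" .
  have "2 \<le> \<bar>lcm a b\<bar>" using good_Z2 y(3) u(3) unfolding good_def Z2_def by blast
  then show "lcm a b \<in> Dset G x" using ex c(1) by (auto simp: Dset_def)
qed

end


context comm_group begin

lemma inv_pow: "x \<in> carrier G \<Longrightarrow> inv x = x [^] (-1::int)"
  using int_pow_neg[of x 1] by simp

lemma arc_pow:
  assumes tf: "torsion_free G" and x: "x \<in> carrier G" and x1: "x \<noteq> \<one>" and n0: "n \<noteq> 0"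
  shows "pm_arc G (x [^] (m::int)) (x [^] (n::int)) \<longleftrightarrow> (m \<noteq> n \<and> m dvd n)"
proof -
  have ne: "x [^] m \<noteq> x [^] n \<longleftrightarrow> m \<noteq> n" using pow_eq[OF tf x x1, of m n] by auto
  have ex: "(\<exists>k::int. k \<noteq> 0 \<and> x [^] n = (x [^] m) [^] k) \<longleftrightarrow> m dvd n"
  proof
    assume "\<exists>k::int. k \<noteq> 0 \<and> x [^] n = (x [^] m) [^] k"
    then obtain k where "x [^] n = x [^] (m * k)" using x by (auto simp: int_pow_pow)
    then have "n = m * k" using pow_eq[OF tf x x1] by blast
    then show "m dvd n" by simp
  next
    assume "m dvd n"
    then obtain k where k: "n = m * k" by blast
    then have "k \<noteq> 0" using n0 by auto
    moreover have "x [^] n = (x [^] m) [^] k" using k x by (simp add: int_pow_pow)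
    ultimately show "\<exists>k::int. k \<noteq> 0 \<and> x [^] n = (x [^] m) [^] k" by (intro exI[of _ k] conjI)
  qed
  have c: "x [^] m \<in> carrier G" "x [^] n \<in> carrier G" using x by simp_all
  show ?thesis unfolding pm_arc_def by (simp only: c ne ex simp_thms)
qed

lemma out_char:
  assumes tf: "torsion_free G" and x: "x \<in> carrier G" and x1: "x \<noteq> \<one>"
  shows "pm_out G x = (\<lambda>n. x [^] n) ` Z2"
proof (intro equalityI subsetI)
  fix y assume "y \<in> pm_out G x"
  then have y: "y \<in> carrier G" "y \<noteq> inv x" "x \<noteq> y" and "\<exists>n::int. n \<noteq> 0 \<and> y = x [^] n"
    unfolding pm_out_def pm_arc_def by auto
  then obtain n :: int where n: "n \<noteq> 0" "y = x [^] n" by blast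
  have "n \<noteq> 1" using n y x by auto
  moreover have "n \<noteq> -1" using n y x inv_pow[OF x] by auto
  ultimately have "n \<in> Z2" using n(1) by (auto simp: Z2_def)
  then show "y \<in> (\<lambda>n. x [^] n) ` Z2" using n by blast
next
  fix y assume "y \<in> (\<lambda>n. x [^] n) ` Z2"
  then obtain n where n: "n \<in> Z2" "y = x [^] n" by blast
  have n0: "n \<noteq> 0" "n \<noteq> 1" "n \<noteq> -1" using n(1) by (auto simp: Z2_def)
  have "y \<noteq> inv x"
  proof
    assume "y = inv x"
    then have "x [^] n = x [^] (-1::int)" using n inv_pow[OF x] by simp
    then show False using pow_eq[OF tf x x1] n0 by blast
  qed
  moreover have "x \<noteq> y"
  proof
    assume "x = y"
    then have "x [^] (1::int) = x [^] n" using n x by simp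
    then show False using pow_eq[OF tf x x1] n0 by blast
  qed
  ultimately show "y \<in> pm_out G x" using n n0 x unfolding pm_out_def pm_arc_def by auto
qed

lemma out_transfer:
  assumes tf: "torsion_free G" and x: "x \<in> carrier G" and x1: "x \<noteq> \<one>"
  shows "bij_betw (\<lambda>n. x [^] n) Z2 (pm_out G x)"
    and "\<forall>m\<in>Z2. \<forall>n\<in>Z2. dg m n \<longleftrightarrow> pm_adj G (x [^] m) (x [^] n)"
proof -
  have "inj_on (\<lambda>n. x [^] n) Z2" using pow_eq[OF tf x x1] by (auto intro: inj_onI)
  then show "bij_betw (\<lambda>n. x [^] n) Z2 (pm_out G x)" using out_char[OF tf x x1] by (simp add: bij_betw_def)
  show "\<forall>m\<in>Z2. \<forall>n\<in>Z2. dg m n \<longleftrightarrow> pm_adj G (x [^] m) (x [^] n)"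
  proof (intro ballI)
    fix m n assume m: "m \<in> Z2" and n: "n \<in> Z2"
    have "m \<noteq> 0" "n \<noteq> 0" using m n by (auto simp: Z2_def)
    then show "dg m n \<longleftrightarrow> pm_adj G (x [^] m) (x [^] n)"
      unfolding pm_adj_def using arc_pow[OF tf x x1, of n m] arc_pow[OF tf x x1, of m n]
      by (auto simp: dg_def)
  qed
qed

end


context comm_group begin

definition rt :: "'a \<Rightarrow> int \<Rightarrow> 'a" where
  "rt x n = (THE y. y \<in> carrier G \<and> y [^] n = x)"

lemma rt_prop:
  assumes tf: "torsion_free G" and nD: "n \<in> Dset G x"
  shows "rt x n \<in> carrier G \<and> rt x n [^] n = x"
proof -
  obtain y where y: "y \<in> carrier G" "y [^] n = x" "2 \<le> \<bar>n\<bar>" using nD by (auto simp: Dset_def)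
  have n0: "n \<noteq> 0" using y(3) by auto
  have "\<exists>!y. y \<in> carrier G \<and> y [^] n = x"
  proof (rule ex1I[of _ y])
    show "y \<in> carrier G \<and> y [^] n = x" using y by simp
    fix z assume z: "z \<in> carrier G \<and> z [^] n = x"
    then have "z [^] n = y [^] n" using y(2) by simp
    then show "z = y" using root_uniq[OF tf _ y(1) n0] z by blast
  qed
  then show ?thesis unfolding rt_def by (rule theI')
qed

lemma rt_eq:
  assumes tf: "torsion_free G" and nD: "n \<in> Dset G x" and y: "y \<in> carrier G" "y [^] n = x"
  shows "rt x n = y"
proof -
  have n0: "n \<noteq> 0" using nD by (auto simp: Dset_def)
  have "rt x n [^] n = y [^] n" using rt_prop[OF tf nD] y by simp
  then show ?thesis using root_uniq[OF tf _ y(1) n0] rt_prop[OF tf nD] by blast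
qed

lemma rt_ne1:
  assumes tf: "torsion_free G" and nD: "n \<in> Dset G x" and x1: "x \<noteq> \<one>"
  shows "rt x n \<noteq> \<one>"
proof
  assume h: "rt x n = \<one>"
  have e: "rt x n [^] n = x" using rt_prop[OF tf nD] by blast
  show False using e h x1 int_pow_one by metis
qed

lemma in_char:
  assumes tf: "torsion_free G" and x: "x \<in> carrier G" and x1: "x \<noteq> \<one>"
  shows "pm_in G x = rt x ` Dset G x"
proof (intro equalityI subsetI)
  fix y assume "y \<in> pm_in G x"
  then have y: "y \<in> carrier G" "y \<noteq> inv x" "y \<noteq> x" and "\<exists>n::int. n \<noteq> 0 \<and> x = y [^] n"
    unfolding pm_in_def pm_arc_def by auto
  then obtain n :: int where n: "n \<noteq> 0" "x = y [^] n" by blast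
  have "n \<noteq> 1" using n y by auto
  moreover have "n \<noteq> -1"
  proof
    assume "n = -1"
    then have "x = inv y" using n y inv_pow[OF y(1)] by simp
    then have "y = inv x" using y(1) x by (simp add: inv_equality)
    then show False using y(2) by blast
  qed
  ultimately have nD: "n \<in> Dset G x" using n y(1) unfolding Dset_def by auto
  have "rt x n = y" using rt_eq[OF tf nD y(1)] n by simp
  then show "y \<in> rt x ` Dset G x" using nD by blast
next
  fix y assume "y \<in> rt x ` Dset G x"
  then obtain n where nD: "n \<in> Dset G x" and yn: "y = rt x n" by blast
  have n0: "n \<noteq> 0" "n \<noteq> 1" "n \<noteq> -1" using nD by (auto simp: Dset_def)
  have yc: "y \<in> carrier G" and yx: "y [^] n = x" using rt_prop[OF tf nD] yn by auto
  have "y \<noteq> x"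
  proof
    assume "y = x"
    then have "x [^] n = x [^] (1::int)" using yx x by simp
    then show False using pow_eq[OF tf x x1] n0 by blast
  qed
  moreover have "y \<noteq> inv x"
  proof
    assume "y = inv x"
    then have "x [^] (-n) = x [^] (1::int)" using yx x by (simp add: int_pow_inv int_pow_neg)
    then have "-n = 1" using pow_eq[OF tf x x1] by blast
    then show False using n0 by simp
  qed
  ultimately show "y \<in> pm_in G x" using yc yx x n0 unfolding pm_in_def pm_arc_def by auto
qed

lemma arc_rt:
  assumes tf: "torsion_free G" and x: "x \<in> carrier G" and x1: "x \<noteq> \<one>"
    and aD: "a \<in> Dset G x" and bD: "b \<in> Dset G x"
  shows "pm_arc G (rt x a) (rt x b) \<longleftrightarrow> (a \<noteq> b \<and> b dvd a)"
proof -
  obtain ya where ya: "ya = rt x a" by simp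
  obtain yb where yb: "yb = rt x b" by simp
  have pa: "ya \<in> carrier G" "ya [^] a = x" using rt_prop[OF tf aD] ya by auto
  have pb: "yb \<in> carrier G" "yb [^] b = x" using rt_prop[OF tf bD] yb by auto
  have ya1: "ya \<noteq> \<one>" using rt_ne1[OF tf aD x1] ya by simp
  have b0: "b \<noteq> 0" using bD by (auto simp: Dset_def)
  have ne: "ya \<noteq> yb \<longleftrightarrow> a \<noteq> b"
  proof
    assume "ya \<noteq> yb" then show "a \<noteq> b" using ya yb by auto
  next
    assume ab: "a \<noteq> b"
    show "ya \<noteq> yb"
    proof
      assume "ya = yb"
      then have "ya [^] a = ya [^] b" using pa pb by simp
      then show False using pow_eq[OF tf pa(1) ya1] ab by blast
    qed
  qed
  have ex: "(\<exists>k::int. k \<noteq> 0 \<and> yb = ya [^] k) \<longleftrightarrow> b dvd a"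
  proof
    assume "\<exists>k::int. k \<noteq> 0 \<and> yb = ya [^] k"
    then obtain k :: int where k: "yb = ya [^] k" by blast
    then have "ya [^] (k * b) = ya [^] a" using pa pb by (simp add: int_pow_pow)
    then have "k * b = a" using pow_eq[OF tf pa(1) ya1] by blast
    then show "b dvd a" by (metis dvd_triv_right)
  next
    assume "b dvd a"
    then obtain k where k: "a = b * k" by blast
    have "a \<noteq> 0" using aD by (auto simp: Dset_def)
    then have k0: "k \<noteq> 0" using k by auto
    have "(ya [^] k) [^] b = ya [^] a" using pa k by (simp add: int_pow_pow mult.commute)
    then have "(ya [^] k) [^] b = yb [^] b" using pa pb by simp
    then have "ya [^] k = yb" using root_uniq[OF tf _ pb(1) b0] pa by simp
    then show "\<exists>k::int. k \<noteq> 0 \<and> yb = ya [^] k" using k0 by (intro exI[of _ k] conjI) simp_all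
  qed
  show ?thesis unfolding pm_arc_def ya[symmetric] yb[symmetric]
    by (simp only: pa(1) pb(1) ne ex simp_thms)
qed

lemma in_transfer:
  assumes tf: "torsion_free G" and x: "x \<in> carrier G" and x1: "x \<noteq> \<one>"
  shows "bij_betw (rt x) (Dset G x) (pm_in G x)"
    and "\<forall>a\<in>Dset G x. \<forall>b\<in>Dset G x. dg a b \<longleftrightarrow> pm_adj G (rt x a) (rt x b)"
proof -
  have "inj_on (rt x) (Dset G x)"
  proof (rule inj_onI)
    fix a b assume aD: "a \<in> Dset G x" and bD: "b \<in> Dset G x" and e: "rt x a = rt x b"
    have pa: "rt x a \<in> carrier G" "rt x a [^] a = x" using rt_prop[OF tf aD] by auto
    have pb: "rt x b [^] b = x" using rt_prop[OF tf bD] by auto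
    have "rt x a [^] a = rt x a [^] b" using pa pb e by simp
    then show "a = b" using pow_eq[OF tf pa(1) rt_ne1[OF tf aD x1]] by blast
  qed
  then show "bij_betw (rt x) (Dset G x) (pm_in G x)" using in_char[OF tf x x1] by (simp add: bij_betw_def)
  show "\<forall>a\<in>Dset G x. \<forall>b\<in>Dset G x. dg a b \<longleftrightarrow> pm_adj G (rt x a) (rt x b)"
    unfolding pm_adj_def using arc_rt[OF tf x x1] by (auto simp: dg_def)
qed

end


context comm_group begin

lemma prime_root:
  assumes tf: "torsion_free G" and lc: "locally_cyclic G"
    and H: "\<forall>x\<in>carrier G. induced_iso (pm_adj G) (pm_out G x) (pm_in G x)"
    and p: "zprime p" and z: "z \<in> carrier G"
  shows "\<exists>y\<in>carrier G. y [^] p = z"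
proof (rule ccontr)
  assume nr: "\<not> (\<exists>y\<in>carrier G. y [^] p = z)"
  have p2: "2 \<le> p" using prime_ge_2_int p by blast
  have p0: "p \<noteq> 0" using p2 by simp
  have z1: "z \<noteq> \<one>"
  proof
    assume "z = \<one>"
    then have "\<one> [^] p = z" by simp
    then show False using nr by blast
  qed
  define x where "x = z [^] p"
  have x: "x \<in> carrier G" using z by (simp add: x_def)
  have x1: "x \<noteq> \<one>" using tf_int[OF tf z p0] z1 by (auto simp: x_def)
  define D where "D = Dset G x"
  have g: "good D" unfolding D_def by (rule good_Dset[OF tf lc x x1])
  have pD: "p \<in> D" using p2 z unfolding D_def Dset_def x_def by auto
  have ppD: "p * p \<notin> D"
  proof
    assume "p * p \<in> D"
    then obtain y where y: "y \<in> carrier G" "y [^] (p * p) = x" unfolding D_def Dset_def by blast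
    have "(y [^] p) [^] p = z [^] p" using y by (simp add: int_pow_pow x_def)
    then have "y [^] p = z" using root_uniq[OF tf _ z p0] y(1) by simp
    then show False using nr y(1) by blast
  qed
  obtain f where f: "bij_betw f (pm_out G x) (pm_in G x)"
    "\<forall>u\<in>pm_out G x. \<forall>v\<in>pm_out G x. pm_adj G u v \<longleftrightarrow> pm_adj G (f u) (f v)"
    using H x unfolding induced_iso_def by blast
  note O = out_transfer[OF tf x x1]
  note I = in_transfer[OF tf x x1]
  have PF: "PF dg D"
    using transfer_bwd(1)[OF I] transfer_fwd(1)[OF f] transfer_fwd(1)[OF O] full_PF
    unfolding D_def by blast
  have PH: "PH dg D"
    using transfer_bwd(2)[OF I] transfer_fwd(2)[OF f] transfer_fwd(2)[OF O] full_PH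
    unfolding D_def by blast
  show False
  proof (cases "finite {s. zprime s \<and> s \<in> D}")
    case True
    then show False using notH[OF g] PH by blast
  next
    case False
    then show False using notF[OF g p pD ppD] PF by blast
  qed
qed

lemma all_root:
  assumes R: "\<And>p z. zprime p \<Longrightarrow> z \<in> carrier G \<Longrightarrow> \<exists>y\<in>carrier G. y [^] p = z"
  shows "0 < k \<Longrightarrow> z \<in> carrier G \<Longrightarrow> \<exists>y\<in>carrier G. y [^] (int k) = z"
proof (induction k arbitrary: z rule: less_induct)
  case (less k)
  show ?case
  proof (cases "k = 1")
    case True then show ?thesis using less.prems by (intro bexI[of _ z]) simp_all
  next
    case False
    then have "k \<noteq> 1" by simp
    then obtain p :: nat where p: "Factorial_Ring.prime p" "p dvd k" using prime_factor_nat by blast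
    then obtain m where m: "k = p * m" by blast
    have p2: "2 \<le> p" using prime_ge_2_nat p(1) by blast
    have m0: "0 < m" using m less.prems(1) by (cases m) auto
    have mk: "m < k" using m p2 m0 by simp
    obtain w where w: "w \<in> carrier G" "w [^] (int m) = z" using less.IH[OF mk m0 less.prems(2)] by blast
    have "zprime (int p)" using p(1) by simp
    then obtain y where y: "y \<in> carrier G" "y [^] (int p) = w" using R w(1) by blast
    have "y [^] (int k) = (y [^] (int p)) [^] (int m)" using y(1) m by (simp add: int_pow_pow)
    also have "\<dots> = z" using y w by simp
    finally show ?thesis using y(1) by blast
  qed
qed

end


lemma group_rat: "group rat_add_group"
  unfolding rat_add_group_def
  by (rule groupI) (auto intro: exI[of _ "- x" for x])

locale divgrp = comm_group +
  fixes g
  assumes tf: "torsion_free G" and lc: "locally_cyclic G"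
    and gc: "g \<in> carrier G" and g1: "g \<noteq> \<one>"
    and DV: "\<And>k z. 0 < k \<Longrightarrow> z \<in> carrier G \<Longrightarrow> \<exists>y\<in>carrier G. y [^] (int k) = z"
begin

definition R :: "int \<Rightarrow> 'a" where "R b = (THE y. y \<in> carrier G \<and> y [^] b = g)"

lemma R_prop: assumes b: "0 < b" shows "R b \<in> carrier G \<and> R b [^] b = g"
proof -
  obtain y where y: "y \<in> carrier G" "y [^] (int (nat b)) = g" using DV[of "nat b" g] b gc by auto
  have y2: "y [^] b = g" using y(2) b by simp
  have "\<exists>!y. y \<in> carrier G \<and> y [^] b = g"
  proof (rule ex1I[of _ y])
    show "y \<in> carrier G \<and> y [^] b = g" using y(1) y2 by simp
    fix z assume z: "z \<in> carrier G \<and> z [^] b = g"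
    then have e: "z [^] b = y [^] b" using y2 by simp
    have b0: "b \<noteq> 0" using b by simp
    show "z = y" using root_uniq[OF tf _ y(1) b0 e] z by blast
  qed
  then show ?thesis unfolding R_def by (rule theI')
qed

lemma R_eq: assumes b: "0 < b" and y: "y \<in> carrier G" "y [^] b = g" shows "R b = y"
proof -
  have e: "R b [^] b = y [^] b" using R_prop[OF b] y by simp
  have b0: "b \<noteq> 0" using b by simp
  show ?thesis using root_uniq[OF tf _ y(1) b0 e] R_prop[OF b] by blast
qed

lemma R_ne1: assumes b: "0 < b" shows "R b \<noteq> \<one>"
proof
  assume h: "R b = \<one>"
  have e: "R b [^] b = g" using R_prop[OF b] by blast
  show False using e h g1 int_pow_one by metis
qed

lemma scale: assumes b: "0 < b" and c: "0 < c" shows "R (b * c) [^] (a * c) = R b [^] a"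
proof -
  have bc: "0 < b * c" using b c by simp
  have Rc: "R (b * c) \<in> carrier G" "R (b * c) [^] (b * c) = g" using R_prop[OF bc] by auto
  have "(R (b * c) [^] c) [^] b = R (b * c) [^] (b * c)" using Rc(1) by (simp add: int_pow_pow mult.commute)
  then have "R b = R (b * c) [^] c" using R_eq[OF b] Rc by simp
  then have "R b [^] a = R (b * c) [^] (c * a)" using Rc(1) by (simp add: int_pow_pow)
  then show ?thesis by (simp add: mult.commute)
qed

definition phi :: "rat \<Rightarrow> 'a" where
  "phi r = R (snd (quotient_of r)) [^] (fst (quotient_of r))"

lemma phi_frac: assumes b: "0 < b" shows "phi (of_int a / of_int b) = R b [^] a"
proof -
  obtain n d where nd: "quotient_of (of_int a / of_int b) = (n, d)" by (cases "quotient_of (of_int a / of_int b)") auto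
  have d: "0 < d" using quotient_of_denom_pos[OF nd] .
  have "of_int a / of_int b = (of_int n / of_int d :: rat)" using quotient_of_div[OF nd] .
  then have "(of_int (a * d) :: rat) = of_int (n * b)" using b d by (simp add: field_simps)
  then have ad: "a * d = n * b" by (simp only: of_int_eq_iff)
  have "phi (of_int a / of_int b) = R d [^] n" by (simp add: phi_def nd)
  also have "\<dots> = R (d * b) [^] (n * b)" using scale[OF d b] by simp
  also have "\<dots> = R (b * d) [^] (a * d)" using ad by (simp add: mult.commute)
  also have "\<dots> = R b [^] a" using scale[OF b d] by simp
  finally show ?thesis .
qed

lemma rat_frac: fixes r :: rat obtains n d where "0 < d" "r = of_int n / of_int d"
proof -
  obtain n d where nd: "quotient_of r = (n, d)" by (cases "quotient_of r") auto
  show ?thesis using that quotient_of_denom_pos[OF nd] quotient_of_div[OF nd] by blast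
qed

lemma phi_add: "phi (r + s) = phi r \<otimes> phi s"
proof -
  obtain n1 d1 where 1: "0 < d1" "r = of_int n1 / of_int d1" by (rule rat_frac)
  obtain n2 d2 where 2: "0 < d2" "s = of_int n2 / of_int d2" by (rule rat_frac)
  have dd: "0 < d1 * d2" using 1 2 by simp
  have eq: "r + s = of_int (n1 * d2 + n2 * d1) / of_int (d1 * d2)" using 1 2 by (simp add: field_simps)
  have "phi (r + s) = R (d1 * d2) [^] (n1 * d2 + n2 * d1)" unfolding eq by (rule phi_frac[OF dd])
  also have "\<dots> = R (d1 * d2) [^] (n1 * d2) \<otimes> R (d1 * d2) [^] (n2 * d1)"
    using R_prop[OF dd] by (simp add: int_pow_mult)
  also have "R (d1 * d2) [^] (n1 * d2) = R d1 [^] n1" using scale[OF 1(1) 2(1)] .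
  also have "R (d1 * d2) [^] (n2 * d1) = R d2 [^] n2" using scale[OF 2(1) 1(1), of n2] by (simp only: mult.commute[of d2 d1])
  also have "R d1 [^] n1 = phi r" using phi_frac[OF 1(1)] 1(2) by simp
  also have "R d2 [^] n2 = phi s" using phi_frac[OF 2(1)] 2(2) by simp
  finally show ?thesis .
qed

lemma phi_inj: "inj phi"
proof (rule injI)
  fix r s assume e: "phi r = phi s"
  obtain n1 d1 where 1: "0 < d1" "r = of_int n1 / of_int d1" by (rule rat_frac)
  obtain n2 d2 where 2: "0 < d2" "s = of_int n2 / of_int d2" by (rule rat_frac)
  have dd: "0 < d1 * d2" using 1 2 by simp
  have r': "r = of_int (n1 * d2) / of_int (d1 * d2)" using 1 2 by (simp add: field_simps)
  have s': "s = of_int (n2 * d1) / of_int (d1 * d2)" using 1 2 by (simp add: field_simps)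
  have "phi r = R (d1 * d2) [^] (n1 * d2)" unfolding r' by (rule phi_frac[OF dd])
  moreover have "phi s = R (d1 * d2) [^] (n2 * d1)" unfolding s' by (rule phi_frac[OF dd])
  ultimately have "R (d1 * d2) [^] (n1 * d2) = R (d1 * d2) [^] (n2 * d1)" using e by simp
  then have "n1 * d2 = n2 * d1" using pow_eq[OF tf _ R_ne1[OF dd]] R_prop[OF dd] by blast
  then show "r = s" using r' s' by simp
qed

lemma phi_surj: "phi ` UNIV = carrier G"
proof (intro equalityI subsetI)
  fix h assume "h \<in> phi ` UNIV"
  then obtain r where r: "h = phi r" by blast
  obtain n d where 1: "0 < d" "r = of_int n / of_int d" by (rule rat_frac)
  show "h \<in> carrier G" using r 1 phi_frac[OF 1(1)] R_prop[OF 1(1)] by simp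
next
  fix h assume h: "h \<in> carrier G"
  obtain c i j where c: "c \<in> carrier G" "g = c [^] (i::int)" "h = c [^] (j::int)"
    using lc_pair[OF lc gc h] by blast
  have i0: "i \<noteq> 0" using c g1 by auto
  obtain c' i' j' where c': "c' \<in> carrier G" "g = c' [^] (i'::int)" "h = c' [^] (j'::int)" "0 < i'"
  proof (cases "0 < i")
    case True then show ?thesis using that c by blast
  next
    case False
    then have "0 < -i" using i0 by simp
    have "inv c \<in> carrier G" using c(1) by simp
    moreover have "g = inv c [^] (-i)" using c by (simp add: int_pow_inv int_pow_neg)
    moreover have "h = inv c [^] (-j)" using c by (simp add: int_pow_inv int_pow_neg)
    moreover note \<open>0 < -i\<close>
    ultimately show ?thesis by (rule that)
  qed
  have "R i' = c'" using R_eq[OF c'(4) c'(1)] c'(2) by simp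
  then have "phi (of_int j' / of_int i') = h" using phi_frac[OF c'(4)] c'(3) by simp
  then show "h \<in> phi ` UNIV" by blast
qed

lemma iso_Q: "G \<cong> rat_add_group"
proof -
  have "phi \<in> iso rat_add_group G"
    unfolding iso_def hom_def rat_add_group_def
    using phi_add phi_inj phi_surj by (auto simp: bij_betw_def)
  then have "rat_add_group \<cong> G" by (rule is_isoI)
  then show ?thesis using group.iso_sym[OF group_rat] by blast
qed

end


theorem mainTheorem7:
  fixes G :: "('a, 'b) monoid_scheme"
  assumes "group G"
    and "carrier G \<noteq> {\<one>\<^bsub>G\<^esub>}"
    and "torsion_free G"
    and "locally_cyclic G"
    and "\<forall>x\<in>carrier G. induced_iso (pm_adj G) (pm_out G x) (pm_in G x)"
  shows "G \<cong> rat_add_group"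
proof -
  interpret group G by (rule assms(1))
  have cg: "comm_group G" using lc_comm[OF assms(4)] .
  interpret comm_group G by (rule cg)
  obtain g where g: "g \<in> carrier G" "g \<noteq> \<one>\<^bsub>G\<^esub>" using assms(2) one_closed by blast
  have R: "\<exists>y\<in>carrier G. y [^]\<^bsub>G\<^esub> p = z" if "zprime p" "z \<in> carrier G" for p z
    using prime_root[OF assms(3,4,5) that] .
  have DV: "\<exists>y\<in>carrier G. y [^]\<^bsub>G\<^esub> (int k) = z" if "0 < k" "z \<in> carrier G" for k z
    using all_root[OF R that] by blast
  interpret divgrp G g
    by (unfold_locales) (use assms(3,4) g DV in auto)
  show ?thesis by (rule iso_Q)
qed

end
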